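(* Let $\hat a=\infty$, $D=1$, $\mu(a,x)\equiv\mu$ for a constant $\mu>0$, and $\beta(a,x)\equiv\beta(x)$ with $\beta\in C(\overline\Omega)$ nonnegative; let $\beta_{\max}=\max_{x\in\overline\Omega}\beta(x)$. Suppose $J(x-y)=\rho$ for all $x,y\in\Omega$, for a constant $\rho>0$. If $$\rho\int_\Omega\frac{dx}{\beta_{\max}-\beta(x)}<1,$$ then $\mathcal A$ admits no eigenvalue with a positive eigenfunction in $\mathrm{dom}(\mathcal A)$; in particular $\mathcal A$ admits no principal eigenvalue.
   Context: Here $\Omega\subset\mathbb R^N$ is a bounded domain, $J\in C(\mathbb R^N)$ is nonnegative, compactly supported, $J(0)>0$, $\int J=1$, and $K\varphi=\int_\Omega J(\cdot-y)\varphi(y)dy$ on $X$ ($X=C(\overline\Omega)$ or $L^1(\Omega)$). $\mathcal A$ is the linear operator on $X\times L^1((0,\infty),X)$ associated with the problem $\partial_a\phi=D(K\phi-\phi)-\mu\phi$, $\phi(0)=\int_0^\infty\beta(a,\cdot)\phi(a)da$; i.e. $(0,\phi)\in\mathrm{dom}(\mathcal A)$ is an eigenvector for eigenvalue $\lambda$ iff $\phi\in W^{1,1}((0,\infty),X)$, $\partial_a\phi=K\phi-\phi-\mu\phi-\lambda\phi$ on $(0,\infty)$ and $\phi(0)=\int_0^\infty\beta\phi\,da$ (here $D=1$). A positive eigenfunction means $\phi\ge0$, $\phi\ne0$. A principal eigenvalue is a real eigenvalue with positive eigenvector larger than the real part of every other eigenvalue. *)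

theory Defs
  imports "HOL-Analysis.Analysis"
begin

text \<open>State space X = C(closure Omega), elements represented as functions
  'a => real of which only the values on closure Omega matter; sup norm.\<close>

definition Xnorm :: "'a::euclidean_space set \<Rightarrow> ('a \<Rightarrow> real) \<Rightarrow> real" where
  "Xnorm \<Omega> f = (SUP x\<in>closure \<Omega>. \<bar>f x\<bar>)"

definition in_X :: "'a::euclidean_space set \<Rightarrow> ('a \<Rightarrow> real) \<Rightarrow> bool" where
  "in_X \<Omega> f \<longleftrightarrow> continuous_on (closure \<Omega>) f"

definition Kop :: "('a::euclidean_space \<Rightarrow> real) \<Rightarrow> 'a set \<Rightarrow> ('a \<Rightarrow> real) \<Rightarrow> ('a \<Rightarrow> real)" where
  "Kop J \<Omega> f = (\<lambda>x. integral \<Omega> (\<lambda>y. J (x - y) * f y))"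

text \<open>phi : [0,inf) -> X has derivative psi (an element of X) at a, in the X-norm
  (one-sided at a = 0).\<close>

definition has_X_derivative ::
  "'a::euclidean_space set \<Rightarrow> (real \<Rightarrow> 'a \<Rightarrow> real) \<Rightarrow> ('a \<Rightarrow> real) \<Rightarrow> real \<Rightarrow> bool" where
  "has_X_derivative \<Omega> \<phi> \<psi> a \<longleftrightarrow>
     ((\<lambda>h. Xnorm \<Omega> (\<lambda>x. (\<phi> (a + h) x - \<phi> a x) / h - \<psi> x)) \<longlongrightarrow> 0) (at 0 within {-a..})"

text \<open>phi in W^{1,1}((0,inf), X) (continuous representative on [0,inf), with
  X-valued derivative psi; phi and psi integrable in X-norm).\<close>

definition W11 :: "'a::euclidean_space set \<Rightarrow> (real \<Rightarrow> 'a \<Rightarrow> real) \<Rightarrow> bool" where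
  "W11 \<Omega> \<phi> \<longleftrightarrow> (\<exists>\<psi>.
     (\<forall>a\<ge>0. in_X \<Omega> (\<phi> a)) \<and> (\<forall>a>0. in_X \<Omega> (\<psi> a)) \<and>
     ((\<lambda>h. Xnorm \<Omega> (\<lambda>x. \<phi> h x - \<phi> 0 x)) \<longlongrightarrow> 0) (at_right 0) \<and>
     (\<forall>a>0. has_X_derivative \<Omega> \<phi> (\<psi> a) a) \<and>
     (\<lambda>a. Xnorm \<Omega> (\<phi> a)) integrable_on {0..} \<and>
     (\<lambda>a. Xnorm \<Omega> (\<psi> a)) integrable_on {0<..})"

text \<open>(0, phi) in dom(A) is an eigenvector of A for the eigenvalue lam
  (D = 1, mu(a,x) = mu constant, beta(a,x) = beta(x)).\<close>

definition is_eigenvector ::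
  "('a::euclidean_space \<Rightarrow> real) \<Rightarrow> 'a set \<Rightarrow> real \<Rightarrow> ('a \<Rightarrow> real) \<Rightarrow> real
    \<Rightarrow> (real \<Rightarrow> 'a \<Rightarrow> real) \<Rightarrow> bool" where
  "is_eigenvector J \<Omega> \<mu> \<beta> lam \<phi> \<longleftrightarrow>
     W11 \<Omega> \<phi> \<and>
     (\<forall>a>0. has_X_derivative \<Omega> \<phi>
              (\<lambda>x. Kop J \<Omega> (\<phi> a) x - \<phi> a x - \<mu> * \<phi> a x - lam * \<phi> a x) a) \<and>
     (\<forall>x\<in>closure \<Omega>. \<phi> 0 x = \<beta> x * integral {0..} (\<lambda>a. \<phi> a x))"

definition positive_fun :: "'a::euclidean_space set \<Rightarrow> (real \<Rightarrow> 'a \<Rightarrow> real) \<Rightarrow> bool" where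
  "positive_fun \<Omega> \<phi> \<longleftrightarrow>
     (\<forall>a\<ge>0. \<forall>x\<in>closure \<Omega>. \<phi> a x \<ge> 0) \<and> (\<exists>a\<ge>0. \<exists>x\<in>closure \<Omega>. \<phi> a x \<noteq> 0)"

end

theory Submission
  imports Defs
begin


lemma cont_integrable_omega:
  fixes f :: "'a::euclidean_space \<Rightarrow> real"
  assumes "open \<Omega>" "bounded \<Omega>" "continuous_on (closure \<Omega>) f"
  shows "f integrable_on \<Omega>"
proof -
  have cc: "compact (closure \<Omega>)" using assms(2) by (simp add: compact_closure)
  have "bounded (f ` closure \<Omega>)" using compact_continuous_image[OF assms(3) cc] compact_imp_bounded by blast
  then obtain B where B: "\<And>x. x \<in> closure \<Omega> \<Longrightarrow> norm (f x) \<le> B" unfolding bounded_iff by blast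
  have L: "\<Omega> \<in> lmeasurable" using assms(1,2) by (simp add: bounded_set_imp_lmeasurable borel_open)
  show ?thesis
  proof (rule measurable_bounded_by_integrable_imp_integrable_real[where g="\<lambda>_. B"])
    show "f \<in> borel_measurable (lebesgue_on \<Omega>)"
      using continuous_imp_measurable_on_sets_lebesgue[of \<Omega> f] assms
      by (meson closure_subset continuous_on_subset L fmeasurableD)
    show "(\<lambda>_. B) integrable_on \<Omega>" using L by (rule integrable_on_const)
    show "\<bar>f x\<bar> \<le> B" if "x \<in> \<Omega>" for x using B[of x] that closure_subset by auto
    show "\<Omega> \<in> sets lebesgue" using L by blast
  qed
qed

lemma measure_open_pos:
  fixes \<Omega> :: "'a::euclidean_space set"
  assumes "open \<Omega>" "bounded \<Omega>" "y \<in> \<Omega>"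
  shows "measure lebesgue \<Omega> > 0"
proof -
  obtain r where r: "r > 0" "ball y r \<subseteq> \<Omega>" using assms openE by blast
  have L: "\<Omega> \<in> lmeasurable" using assms(1,2) by (simp add: bounded_set_imp_lmeasurable borel_open)
  have "measure lebesgue (ball y r) \<le> measure lebesgue \<Omega>"
    by (rule measure_mono_fmeasurable) (use r L in auto)
  moreover have "measure lebesgue (ball y r) > 0" using content_ball_pos[OF r(1), of y]
    by (simp add: measure_completion)
  ultimately show ?thesis by linarith
qed

lemma integral_pos_point:
  fixes f :: "'a::euclidean_space \<Rightarrow> real"
  assumes "open \<Omega>" "bounded \<Omega>" "continuous_on (closure \<Omega>) f"
    and "\<forall>x\<in>\<Omega>. f x \<ge> 0" and "x0 \<in> closure \<Omega>" and "f x0 > 0"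
  shows "integral \<Omega> f > 0"
proof -
  obtain y where y: "y \<in> \<Omega>" "f y > 0"
  proof (rule ccontr)
    assume "\<not> thesis"
    then have "\<And>y. y \<in> \<Omega> \<Longrightarrow> f y \<le> 0" using that by force
    then have "f x0 \<le> 0" using continuous_le_on_closure[OF assms(3) assms(5)] by blast
    then show False using assms(6) by simp
  qed
  have "continuous (at y) f"
    using assms(3) y(1) assms(1) continuous_on_interior[of "closure \<Omega>" f y]
    by (metis closure_subset interior_maximal interior_subset subsetD)
  then obtain r where r: "r > 0" "\<And>z. dist z y < r \<Longrightarrow> dist (f z) (f y) < f y / 2"
    using y(2) unfolding continuous_at_eps_delta by (metis half_gt_zero)
  obtain r' where r': "r' > 0" "ball y r' \<subseteq> \<Omega>" using assms(1) y(1) openE by blast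
  define s where "s = min r r'"
  have s: "s > 0" "ball y s \<subseteq> \<Omega>" using r r' unfolding s_def by auto
  have fb: "f z \<ge> f y / 2" if "z \<in> ball y s" for z
  proof -
    have "dist z y < r" using that unfolding s_def by (auto simp: dist_commute)
    then have "\<bar>f z - f y\<bar> < f y / 2" using r(2)[of z] by (simp add: dist_real_def)
    then show ?thesis by linarith
  qed
  have L: "\<Omega> \<in> lmeasurable" using assms(1,2) by (simp add: bounded_set_imp_lmeasurable borel_open)
  have LB: "ball y s \<in> lmeasurable" by simp
  have fi: "f integrable_on \<Omega>" using cont_integrable_omega assms by blast
  have fib: "f integrable_on ball y s"
  proof -
    have "cball y s \<subseteq> closure \<Omega>" using closure_mono[OF s(2)] s(1) by simp
    then show ?thesis
      by (intro cont_integrable_omega) (use assms(3) s in \<open>auto intro: continuous_on_subset\<close>)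
  qed
  have "integral (ball y s) (\<lambda>_. f y / 2) \<le> integral (ball y s) f"
    by (rule integral_le) (use integrable_on_const[OF LB] fib fb in auto)
  moreover have "integral (ball y s) (\<lambda>_. f y / 2) = measure lebesgue (ball y s) * (f y / 2)"
    using lmeasure_integral[OF LB] integral_mult_left[of "ball y s" "\<lambda>_. 1" "f y / 2"] by simp
  moreover have "measure lebesgue (ball y s) > 0" using content_ball_pos[OF s(1), of y]
    by (simp add: measure_completion)
  moreover have "integral (ball y s) f \<le> integral \<Omega> f"
    by (rule integral_subset_le) (use s fib fi assms(4) in auto)
  moreover have "measure lebesgue (ball y s) * (f y / 2) > 0"
    using calculation(3) y(2) by simp
  ultimately show ?thesis by linarith
qed


lemma xnorm_bound:
  fixes f :: "'a::euclidean_space \<Rightarrow> real"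
  assumes "bounded \<Omega>" "continuous_on (closure \<Omega>) f" "x \<in> closure \<Omega>"
  shows "\<bar>f x\<bar> \<le> Xnorm \<Omega> f"
proof -
  have cc: "compact (closure \<Omega>)" using assms(1) by (simp add: compact_closure)
  have "continuous_on (closure \<Omega>) (\<lambda>x. \<bar>f x\<bar>)" using assms(2) by (intro continuous_intros)
  then have "bounded ((\<lambda>x. \<bar>f x\<bar>) ` closure \<Omega>)" using compact_continuous_image cc compact_imp_bounded by blast
  then have "bdd_above ((\<lambda>x. \<bar>f x\<bar>) ` closure \<Omega>)" by (rule bounded_imp_bdd_above)
  then show ?thesis unfolding Xnorm_def using assms(3) by (rule cSUP_upper2) simp
qed

lemma integrable_eventually_ge_False:
  fixes F :: "real \<Rightarrow> real"
  assumes "F integrable_on {0..}" "\<And>a. a \<ge> 0 \<Longrightarrow> F a \<ge> 0" "e > 0" "T \<ge> 0"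
    and "\<And>a. a \<ge> T \<Longrightarrow> F a \<ge> e"
  shows False
proof -
  define I where "I = integral {0..} F"
  define n where "n = real (nat (ceiling (I / e))) + 1"
  have n: "n * e > I"
  proof -
    have "I / e < n" unfolding n_def by linarith
    then show ?thesis using assms(3) by (simp add: divide_less_eq mult.commute)
  qed
  have n0: "n \<ge> 0" unfolding n_def by simp
  have sub: "{T..T+n} \<subseteq> {0..}" using assms(4) by auto
  have Fi: "F integrable_on {T..T+n}" using integrable_on_subinterval[OF assms(1) sub] .
  have "integral {T..T+n} (\<lambda>_. e) \<le> integral {T..T+n} F"
    by (rule integral_le) (use Fi assms(5) in auto)
  moreover have "integral {T..T+n} (\<lambda>_. e) = n * e" using n0 by simp
  moreover have "integral {T..T+n} F \<le> I" unfolding I_def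
    by (rule integral_subset_le[OF sub Fi assms(1)]) (use assms(2) in auto)
  ultimately show False using n by linarith
qed

lemma ode_const:
  fixes w :: "real \<Rightarrow> real"
  assumes "(w \<longlongrightarrow> w 0) (at_right 0)" "\<And>t. t > 0 \<Longrightarrow> (w has_real_derivative 0) (at t)"
    and "a \<ge> 0"
  shows "w a = w 0"
proof (cases "a = 0")
  case False
  then have a: "a > 0" using assms(3) by simp
  have "continuous_on {0..a} w"
  proof (rule continuous_on_IccI[OF assms(1) _ _ a])
    show "(w \<longlongrightarrow> w a) (at_left a)"
      using DERIV_isCont[OF assms(2)[OF a]] by (simp add: isCont_def filterlim_at_split)
    show "w \<midarrow>x\<rightarrow> w x" if "0 < x" "x < a" for x
      using DERIV_isCont[OF assms(2)[of x]] that by (simp add: isCont_def)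
  qed
  then show ?thesis by (rule DERIV_isconst_end[OF a]) (use assms(2) in auto)
qed simp

lemma xderiv_pointwise:
  fixes \<phi> :: "real \<Rightarrow> 'a::euclidean_space \<Rightarrow> real"
  assumes "bounded \<Omega>" "x \<in> closure \<Omega>" "a > 0" "has_X_derivative \<Omega> \<phi> \<psi> a"
    and "\<And>t. t \<ge> 0 \<Longrightarrow> continuous_on (closure \<Omega>) (\<phi> t)" "continuous_on (closure \<Omega>) \<psi>"
  shows "((\<lambda>t. \<phi> t x) has_real_derivative \<psi> x) (at a)"
proof -
  have "at 0 within {-a..} = at (0::real)"
    by (rule at_within_interior) (use assms(3) in simp)
  then have lim: "((\<lambda>h. Xnorm \<Omega> (\<lambda>x. (\<phi> (a + h) x - \<phi> a x) / h - \<psi> x)) \<longlongrightarrow> 0) (at 0)"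
    using assms(4) unfolding has_X_derivative_def by simp
  have ev0: "eventually (\<lambda>h. h \<in> {-a<..}) (at (0::real))"
    using assms(3) by (intro eventually_at_in_open') auto
  have ev: "eventually (\<lambda>h. h \<in> {-a<..} \<and> h \<noteq> 0) (at (0::real))"
    using ev0 by (simp add: eventually_at_filter)
  have "eventually (\<lambda>h. norm ((\<phi> (a + h) x - \<phi> a x) / h - \<psi> x) \<le>
          Xnorm \<Omega> (\<lambda>x. (\<phi> (a + h) x - \<phi> a x) / h - \<psi> x)) (at 0)"
    using ev
  proof eventually_elim
    case (elim h)
    have "continuous_on (closure \<Omega>) (\<lambda>x. (\<phi> (a + h) x - \<phi> a x) / h - \<psi> x)"
      using assms(5)[of "a+h"] assms(5)[of a] assms(3,6) elim by (intro continuous_intros) auto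
    then show ?case using xnorm_bound[OF assms(1) _ assms(2)] by simp
  qed
  then have "((\<lambda>h. (\<phi> (a + h) x - \<phi> a x) / h - \<psi> x) \<longlongrightarrow> 0) (at 0)"
    using lim by (rule Lim_null_comparison)
  then have "((\<lambda>h. (\<phi> (a + h) x - \<phi> a x) / h) \<longlongrightarrow> \<psi> x) (at 0)"
    by (simp add: LIM_zero_iff)
  then show ?thesis by (simp add: DERIV_def)
qed

lemma rc_pointwise:
  fixes \<phi> :: "real \<Rightarrow> 'a::euclidean_space \<Rightarrow> real"
  assumes "bounded \<Omega>" "x \<in> closure \<Omega>"
    and "((\<lambda>h. Xnorm \<Omega> (\<lambda>x. \<phi> h x - \<phi> 0 x)) \<longlongrightarrow> 0) (at_right 0)"
    and "\<And>t. t \<ge> 0 \<Longrightarrow> continuous_on (closure \<Omega>) (\<phi> t)"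
  shows "((\<lambda>t. \<phi> t x) \<longlongrightarrow> \<phi> 0 x) (at_right 0)"
proof -
  have "eventually (\<lambda>h. norm (\<phi> h x - \<phi> 0 x) \<le> Xnorm \<Omega> (\<lambda>x. \<phi> h x - \<phi> 0 x)) (at_right (0::real))"
    using eventually_at_right_less[of 0]
  proof eventually_elim
    case (elim h)
    have "continuous_on (closure \<Omega>) (\<lambda>x. \<phi> h x - \<phi> 0 x)"
      using assms(4)[of h] assms(4)[of 0] elim by (intro continuous_intros) auto
    then show ?case using xnorm_bound[OF assms(1) _ assms(2)] by simp
  qed
  then have "((\<lambda>h. \<phi> h x - \<phi> 0 x) \<longlongrightarrow> 0) (at_right 0)"
    using assms(3) by (rule Lim_null_comparison)
  then show ?thesis by (simp add: LIM_zero_iff)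
qed



theorem mainTheorem13:
  fixes \<Omega> :: "'a::euclidean_space set" and J \<beta> :: "'a \<Rightarrow> real" and \<mu> \<rho> :: real
  assumes "open \<Omega>" and "connected \<Omega>" and "bounded \<Omega>" and "\<Omega> \<noteq> {}"
    and "continuous_on UNIV J" and "\<forall>x. J x \<ge> 0" and "bounded {x. J x \<noteq> 0}"
    and "J 0 > 0" and "(J has_integral 1) UNIV"
    and "\<mu> > 0"
    and "continuous_on (closure \<Omega>) \<beta>" and "\<forall>x\<in>closure \<Omega>. \<beta> x \<ge> 0"
    and "\<rho> > 0" and "\<forall>x\<in>\<Omega>. \<forall>y\<in>\<Omega>. J (x - y) = \<rho>"
    and "ennreal \<rho> * (\<integral>\<^sup>+ x\<in>\<Omega>. inverse (ennreal ((SUP z\<in>closure \<Omega>. \<beta> z) - \<beta> x)) \<partial>lborel) < 1"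
  shows "\<not> (\<exists>lam \<phi>. is_eigenvector J \<Omega> \<mu> \<beta> lam \<phi> \<and> positive_fun \<Omega> \<phi>)"
proof
  assume "\<exists>lam \<phi>. is_eigenvector J \<Omega> \<mu> \<beta> lam \<phi> \<and> positive_fun \<Omega> \<phi>"
  then obtain lam \<phi> where EV: "is_eigenvector J \<Omega> \<mu> \<beta> lam \<phi>" and POS: "positive_fun \<Omega> \<phi>" by blast
  note ev = EV[unfolded is_eigenvector_def]
  have W: "W11 \<Omega> \<phi>" and D: "\<forall>a>0. has_X_derivative \<Omega> \<phi>
              (\<lambda>x. Kop J \<Omega> (\<phi> a) x - \<phi> a x - \<mu> * \<phi> a x - lam * \<phi> a x) a"
    and BC: "\<forall>x\<in>closure \<Omega>. \<phi> 0 x = \<beta> x * integral {0..} (\<lambda>a. \<phi> a x)"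
    using ev by auto
  from W obtain \<psi> where inX: "\<forall>a\<ge>0. in_X \<Omega> (\<phi> a)"
    and RC: "((\<lambda>h. Xnorm \<Omega> (\<lambda>x. \<phi> h x - \<phi> 0 x)) \<longlongrightarrow> 0) (at_right 0)"
    and intF: "(\<lambda>a. Xnorm \<Omega> (\<phi> a)) integrable_on {0..}"
    unfolding W11_def by blast
  have contphi: "\<And>t. t \<ge> 0 \<Longrightarrow> continuous_on (closure \<Omega>) (\<phi> t)"
    using inX unfolding in_X_def by auto
  have pos0: "\<And>t x. t \<ge> 0 \<Longrightarrow> x \<in> closure \<Omega> \<Longrightarrow> \<phi> t x \<ge> 0"
    and posnz: "\<exists>t\<ge>0. \<exists>x\<in>closure \<Omega>. \<phi> t x \<noteq> 0"
    using POS unfolding positive_fun_def by auto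
  have L: "\<Omega> \<in> lmeasurable" using assms(1,3) by (simp add: bounded_set_imp_lmeasurable borel_open)
  obtain z where z: "z \<in> \<Omega>" using assms(4) by blast
  have zC: "z \<in> closure \<Omega>" using z closure_subset by blast
  define c where "c = 1 + \<mu> + lam"
  define h where "h = \<phi> 0"
  define M where "M = (\<lambda>t. integral \<Omega> (\<phi> t))"
  define m where "m = measure lebesgue \<Omega>"
  define k where "k = \<rho> * m"
  define H where "H = integral \<Omega> h"
  have m0: "m > 0" unfolding m_def using measure_open_pos[OF assms(1,3) z] .
  have k0: "k > 0" unfolding k_def using m0 assms(13) by simp
  have hC: "continuous_on (closure \<Omega>) h" unfolding h_def using contphi by simp
  have hi: "h integrable_on \<Omega>" using cont_integrable_omega[OF assms(1,3) hC] .
  have JC: "J (x - y) = \<rho>" if "x \<in> closure \<Omega>" "y \<in> \<Omega>" for x y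
  proof -
    have "closed {x. J (x - y) = \<rho>}"
      by (intro closed_Collect_eq continuous_intros continuous_on_compose2[OF assms(5)]) auto
    moreover have "\<Omega> \<subseteq> {x. J (x - y) = \<rho>}" using assms(14) that(2) by auto
    ultimately show ?thesis using closure_minimal that(1) by blast
  qed
  have KC: "Kop J \<Omega> (\<phi> t) x = \<rho> * M t" if "x \<in> closure \<Omega>" for t x
  proof -
    have "Kop J \<Omega> (\<phi> t) x = integral \<Omega> (\<lambda>y. \<rho> * \<phi> t y)"
      unfolding Kop_def by (rule integral_cong) (use JC that in auto)
    then show ?thesis unfolding M_def by simp
  qed
  have PD: "((\<lambda>t. \<phi> t x) has_real_derivative (\<rho> * M a - c * \<phi> a x)) (at a)"
    if "a > 0" "x \<in> closure \<Omega>" for a x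
  proof -
    have "((\<lambda>t. \<phi> t x) has_real_derivative
       (\<lambda>x. Kop J \<Omega> (\<phi> a) x - \<phi> a x - \<mu> * \<phi> a x - lam * \<phi> a x) x) (at a)"
    proof (rule xderiv_pointwise[OF assms(3) that(2) that(1)])
      show "has_X_derivative \<Omega> \<phi> (\<lambda>x. Kop J \<Omega> (\<phi> a) x - \<phi> a x - \<mu> * \<phi> a x - lam * \<phi> a x) a"
        using D that(1) by blast
      show "continuous_on (closure \<Omega>) (\<phi> t)" if "t \<ge> 0" for t using contphi that .
      have "continuous_on (closure \<Omega>) (\<lambda>x. \<rho> * M a - \<phi> a x - \<mu> * \<phi> a x - lam * \<phi> a x)"
        using contphi[of a] that by (intro continuous_intros) auto
      then show "continuous_on (closure \<Omega>) (\<lambda>x. Kop J \<Omega> (\<phi> a) x - \<phi> a x - \<mu> * \<phi> a x - lam * \<phi> a x)"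
        by (rule continuous_on_eq) (use KC in auto)
    qed
    then show ?thesis using KC[OF that(2)] unfolding c_def by (simp add: algebra_simps)
  qed
  have RCp: "((\<lambda>t. \<phi> t x) \<longlongrightarrow> h x) (at_right 0)" if "x \<in> closure \<Omega>" for x
    unfolding h_def using rc_pointwise[OF assms(3) that RC contphi] .
  have DIFF: "\<phi> t x - \<phi> t z = exp (-c * t) * (h x - h z)" if "x \<in> closure \<Omega>" "t \<ge> 0" for x t
  proof -
    define w where "w = (\<lambda>s. exp (c * s) * (\<phi> s x - \<phi> s z))"
    have "w t = w 0"
    proof (rule ode_const[OF _ _ that(2)])
      have "(w \<longlongrightarrow> exp (c * 0) * (h x - h z)) (at_right 0)"
        unfolding w_def by (intro tendsto_intros RCp that(1) zC)
      then show "(w \<longlongrightarrow> w 0) (at_right 0)" unfolding w_def h_def by simp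
      show "(w has_real_derivative 0) (at s)" if "s > 0" for s
      proof -
        note d1 = PD[OF that \<open>x \<in> closure \<Omega>\<close>] and d2 = PD[OF that zC]
        have e: "((\<lambda>s. exp (c * s)) has_real_derivative exp (c * s) * c) (at s)"
          using DERIV_exp[of "c * s"] DERIV_cmult_Id[of c s] DERIV_chain2 by blast
        have "(w has_real_derivative exp (c * s) * c * (\<phi> s x - \<phi> s z) +
               ((\<rho> * M s - c * \<phi> s x) - (\<rho> * M s - c * \<phi> s z)) * exp (c * s)) (at s)"
          unfolding w_def by (rule DERIV_mult[OF e DERIV_diff[OF d1 d2]])
        then show ?thesis by (simp add: algebra_simps)
      qed
    qed
    then have "exp (c * t) * (\<phi> t x - \<phi> t z) = h x - h z" unfolding w_def h_def by simp
    then have "exp (-c * t) * (exp (c * t) * (\<phi> t x - \<phi> t z)) = exp (-c * t) * (h x - h z)" by simp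
    then show ?thesis by (simp add: mult.assoc[symmetric] exp_add[symmetric])
  qed
  define g where "g = (\<lambda>t. \<phi> t z - exp (-c * t) * h z)"
  have PHIG: "\<phi> t x = g t + exp (-c * t) * h x" if "x \<in> closure \<Omega>" "t \<ge> 0" for x t
    using DIFF[OF that] unfolding g_def by (simp add: algebra_simps)
  have MG: "M t = m * g t + exp (-c * t) * H" if "t \<ge> 0" for t
  proof -
    have "M t = integral \<Omega> (\<lambda>y. g t + exp (-c * t) * h y)"
      unfolding M_def by (rule integral_cong) (use PHIG that closure_subset in blast)
    also have "\<dots> = integral \<Omega> (\<lambda>y. g t) + integral \<Omega> (\<lambda>y. exp (-c * t) * h y)"
      by (rule integral_add[OF integrable_on_const[OF L] integrable_on_mult_right[OF hi]])
    also have "integral \<Omega> (\<lambda>y. g t) = m * g t"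
      using lmeasure_integral[OF L] integral_mult_left[of \<Omega> "\<lambda>_. 1" "g t"] unfolding m_def by simp
    finally show ?thesis unfolding H_def by simp
  qed
  have GD: "(g has_real_derivative (k - c) * g s + \<rho> * H * exp (-c * s)) (at s)" if "s > 0" for s
  proof -
    have e: "((\<lambda>s. exp (-c * s)) has_real_derivative exp (-c * s) * (-c)) (at s)"
      using DERIV_exp[of "-c * s"] DERIV_cmult_Id[of "-c" s] DERIV_chain2 by blast
    have "(g has_real_derivative (\<rho> * M s - c * \<phi> s z) - exp (-c * s) * (-c) * h z) (at s)"
      unfolding g_def by (rule DERIV_diff[OF PD[OF that zC] DERIV_cmult_right[OF e]])
    moreover have "(\<rho> * M s - c * \<phi> s z) - exp (-c * s) * (-c) * h z = (k - c) * g s + \<rho> * H * exp (-c * s)"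
      using MG[of s] PHIG[OF zC, of s] that unfolding k_def by (simp add: algebra_simps)
    ultimately show ?thesis by simp
  qed
  have g0: "(g \<longlongrightarrow> 0) (at_right 0)"
  proof -
    have "(g \<longlongrightarrow> h z - exp (-c * 0) * h z) (at_right 0)"
      unfolding g_def by (intro tendsto_intros RCp zC)
    then show ?thesis by simp
  qed
  define B where "B = H / m"
  have G: "g t = B * (exp ((k-c)*t) - exp (-c * t))" if "t \<ge> 0" for t
  proof -
    define w where "w = (\<lambda>s. exp ((c-k) * s) * g s + (\<rho>*H/k) * exp (-k * s))"
    have "w t = w 0"
    proof (rule ode_const[OF _ _ that])
      have "(w \<longlongrightarrow> exp ((c-k) * 0) * 0 + (\<rho>*H/k) * exp (-k * 0)) (at_right 0)"
        unfolding w_def by (intro tendsto_intros g0)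
      moreover have "g 0 = 0" unfolding g_def h_def by simp
      ultimately show "(w \<longlongrightarrow> w 0) (at_right 0)" unfolding w_def by simp
      show "(w has_real_derivative 0) (at s)" if "s > 0" for s
      proof -
        have e1: "((\<lambda>s. exp ((c-k) * s)) has_real_derivative exp ((c-k) * s) * (c-k)) (at s)"
          using DERIV_exp[of "(c-k) * s"] DERIV_cmult_Id[of "c-k" s] DERIV_chain2 by blast
        have e2: "((\<lambda>s. exp (-k * s)) has_real_derivative exp (-k * s) * (-k)) (at s)"
          using DERIV_exp[of "-k * s"] DERIV_cmult_Id[of "-k" s] DERIV_chain2 by blast
        have "(w has_real_derivative (exp ((c-k) * s) * (c-k) * g s + ((k - c) * g s + \<rho> * H * exp (-c * s)) * exp ((c-k) * s))
             + (\<rho>*H/k) * (exp (-k * s) * (-k))) (at s)"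
          unfolding w_def by (rule DERIV_add[OF DERIV_mult[OF e1 GD[OF that]] DERIV_cmult[OF e2]])
        moreover have "exp (-c * s) * exp ((c-k) * s) = exp (-k * s)"
          by (simp flip: exp_add add: algebra_simps)
        ultimately show ?thesis using k0 by (simp add: algebra_simps)
      qed
    qed
    moreover have "g 0 = 0" unfolding g_def h_def by simp
    ultimately have eq: "exp ((c-k) * t) * g t + (\<rho>*H/k) * exp (-k * t) = \<rho>*H/k" unfolding w_def by simp
    have ee: "exp ((k-c) * t) * exp ((c-k) * t) = 1"
      by (simp flip: exp_add add: algebra_simps)
    have "g t = (exp ((k-c) * t) * exp ((c-k) * t)) * g t" using ee by simp
    also have "\<dots> = exp ((k-c) * t) * (exp ((c-k) * t) * g t)" by (simp only: mult.assoc)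
    also have "\<dots> = exp ((k-c) * t) * ((\<rho>*H/k) * (1 - exp (-k * t)))"
    proof -
      have "(\<rho>*H/k) * (1 - exp (-k * t)) = \<rho>*H/k - (\<rho>*H/k) * exp (-k * t)"
        by (simp only: right_diff_distrib mult_1_right)
      then have "exp ((c-k) * t) * g t = (\<rho>*H/k) * (1 - exp (-k * t))" using eq by linarith
      then show ?thesis by simp
    qed
    also have "\<dots> = (\<rho>*H/k) * (exp ((k-c) * t) - exp ((k-c) * t) * exp (-k * t))"
      by (simp add: algebra_simps)
    also have "exp ((k-c) * t) * exp (-k * t) = exp (-c * t)"
      by (simp flip: exp_add add: algebra_simps)
    also have "\<rho>*H/k = B" unfolding B_def k_def using assms(13) m0 by simp
    finally show ?thesis .
  qed
  have FF: "\<phi> t x = B * exp ((k-c)*t) + (h x - B) * exp (-c * t)" if "x \<in> closure \<Omega>" "t \<ge> 0" for x t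
    using PHIG[OF that] G[OF that(2)] by (simp add: algebra_simps)
  have hnn: "h y \<ge> 0" if "y \<in> closure \<Omega>" for y using pos0[of 0 y] that unfolding h_def by simp
  have H0: "H \<ge> 0" unfolding H_def using hi hnn closure_subset by (intro integral_nonneg) auto
  have HP: "H > 0"
  proof (rule ccontr)
    assume "\<not> H > 0"
    then have "H = 0" using H0 by simp
    then have B0: "B = 0" unfolding B_def by simp
    obtain t0 x0 where t0: "t0 \<ge> 0" "x0 \<in> closure \<Omega>" "\<phi> t0 x0 \<noteq> 0" using posnz by blast
    have "h x0 \<noteq> 0" using FF[OF t0(2,1)] t0(3) B0 by auto
    then have "h x0 > 0" using hnn[OF t0(2)] by simp
    then have "H > 0" unfolding H_def
      using integral_pos_point[OF assms(1,3) hC _ t0(2)] hnn closure_subset by blast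
    then show False using \<open>H = 0\<close> by simp
  qed
  have BP: "B > 0" unfolding B_def using HP m0 by simp
  have xn: "\<bar>\<phi> t x\<bar> \<le> Xnorm \<Omega> (\<phi> t)" if "t \<ge> 0" "x \<in> closure \<Omega>" for t x
    using xnorm_bound[OF assms(3) contphi[OF that(1)] that(2)] .
  have CK: "c > k"
  proof (rule ccontr)
    assume "\<not> c > k"
    then have ck: "k - c \<ge> 0" by simp
    define A where "A = h z - B"
    have "filterlim (\<lambda>t::real. (-k) * t) at_bot at_top"
      by (rule filterlim_tendsto_neg_mult_at_bot[OF tendsto_const _ filterlim_ident]) (use k0 in simp)
    then have "((\<lambda>t::real. exp ((-k) * t)) \<longlongrightarrow> 0) at_top"
      using exp_at_bot filterlim_compose by blast
    then have "((\<lambda>t::real. A * exp ((-k) * t)) \<longlongrightarrow> A * 0) at_top"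
      by (intro tendsto_intros)
    then have "eventually (\<lambda>t. A * exp ((-k) * t) > - B / 2) at_top"
      using BP by (intro order_tendstoD(1)) auto
    then obtain T where T: "\<And>t. t \<ge> T \<Longrightarrow> A * exp ((-k) * t) > - B / 2"
      unfolding eventually_at_top_linorder by blast
    show False
    proof (rule integrable_eventually_ge_False[OF intF _ _ _ ])
      show "Xnorm \<Omega> (\<phi> a) \<ge> 0" if "a \<ge> 0" for a using xn[OF that zC] by linarith
      show "B / 2 > 0" using BP by simp
      show "max T 0 \<ge> 0" by simp
      show "Xnorm \<Omega> (\<phi> a) \<ge> B / 2" if "a \<ge> max T 0" for a
      proof -
        have a0: "a \<ge> 0" using that by simp
        have e1: "exp ((k-c) * a) \<ge> 1" using ck a0 by simp
        have "exp (-c * a) = exp ((k-c) * a) * exp ((-k) * a)"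
          by (simp flip: exp_add add: algebra_simps)
        then have "\<phi> a z = exp ((k-c) * a) * (B + A * exp ((-k) * a))"
          using FF[OF zC a0] unfolding A_def by (simp add: algebra_simps)
        moreover have "B + A * exp ((-k) * a) \<ge> B / 2" using T[of a] that by simp
        ultimately have "\<phi> a z \<ge> 1 * (B / 2)"
        proof -
          have "1 * (B / 2) \<le> exp ((k-c) * a) * (B + A * exp ((-k) * a))"
            by (rule mult_mono) (use e1 BP \<open>B + A * exp ((-k) * a) \<ge> B / 2\<close> in auto)
          then show ?thesis using \<open>\<phi> a z = _\<close> by simp
        qed
        then show ?thesis using xn[OF a0 zC] by simp
      qed
    qed
  qed
  have c0: "c > 0" using CK k0 by simp
  have PHI: "integral {0..} (\<lambda>t. \<phi> t x) = B / (c-k) + (h x - B) / c" if "x \<in> closure \<Omega>" for x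
  proof -
    have "integral {0..} (\<lambda>t. \<phi> t x) = integral {0..} (\<lambda>t. B * exp (-(c-k)*t) + (h x - B) * exp (-c * t))"
      by (rule integral_cong) (use FF[OF that] in \<open>auto simp: algebra_simps\<close>)
    moreover have "((\<lambda>t. B * exp (-(c-k)*t) + (h x - B) * exp (-c * t)) has_integral
        (B * (exp (-(c-k)*0) / (c-k)) + (h x - B) * (exp (-c*0) / c))) {0..}"
      by (intro has_integral_add has_integral_mult_right has_integral_exp_minus_to_infinity) (use CK c0 in auto)
    ultimately show ?thesis by (simp add: integral_unique)
  qed
  define L where "L = B * k / (c-k)"
  have LP: "L > 0" unfolding L_def using BP k0 CK by simp
  define Phi where "Phi = (\<lambda>x. B / (c-k) + (h x - B) / c)"
  have cPhi: "c * Phi x = h x + L" for x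
    unfolding Phi_def L_def using CK c0 by (simp add: field_simps)
  have PhiP: "Phi x > 0" if "x \<in> closure \<Omega>" for x
  proof -
    have "c * Phi x > 0" using cPhi[of x] hnn[OF that] LP by simp
    then show ?thesis using c0 by (simp add: zero_less_mult_iff)
  qed
  have BCx: "(c - \<beta> x) * Phi x = L" if "x \<in> closure \<Omega>" for x
  proof -
    have "h x = \<beta> x * Phi x" using BC that PHI[OF that] unfolding h_def Phi_def by simp
    then show ?thesis using cPhi[of x] by (simp add: algebra_simps)
  qed
  have cb: "c - \<beta> x > 0" if "x \<in> closure \<Omega>" for x
    using BCx[OF that] PhiP[OF that] LP by (metis zero_less_mult_pos2)
  have ccl: "compact (closure \<Omega>)" using assms(3) by (simp add: compact_closure)
  obtain xs where xs: "xs \<in> closure \<Omega>" "\<And>y. y \<in> closure \<Omega> \<Longrightarrow> \<beta> y \<le> \<beta> xs"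
  proof -
    have "closure \<Omega> \<noteq> {}" using zC by (metis empty_iff)
    from continuous_attains_sup[OF ccl this assms(11)] show ?thesis using that by blast
  qed
  define bm where "bm = (SUP z\<in>closure \<Omega>. \<beta> z)"
  have bmx: "bm = \<beta> xs" unfolding bm_def
    by (rule antisym) (use xs in \<open>auto intro!: cSUP_least cSUP_upper2 bdd_aboveI2\<close>)
  have cbm: "c > bm" using cb[OF xs(1)] bmx by simp
  define f where "f = (\<lambda>y. 1 / (c - \<beta> y))"
  have fC: "continuous_on (closure \<Omega>) f" unfolding f_def
    using assms(11) cb by (intro continuous_intros) auto
  have fi: "f integrable_on \<Omega>" using cont_integrable_omega[OF assms(1,3) fC] .
  define I where "I = integral \<Omega> f"
  have hf: "h y = c * L * f y - L" if "y \<in> closure \<Omega>" for y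
  proof -
    have "Phi y = L / (c - \<beta> y)" using BCx[OF that] cb[OF that] by (simp add: field_simps)
    then show ?thesis using cPhi[of y] unfolding f_def by (simp add: field_simps)
  qed
  have HI: "H = c * L * I - L * m"
  proof -
    have "H = integral \<Omega> (\<lambda>y. c * L * f y - L)"
      unfolding H_def by (rule integral_cong) (use hf closure_subset in blast)
    also have "\<dots> = integral \<Omega> (\<lambda>y. c * L * f y) - integral \<Omega> (\<lambda>y. L)"
      by (rule integral_diff[OF integrable_on_mult_right[OF fi] integrable_on_const[OF L]])
    also have "integral \<Omega> (\<lambda>y. L) = L * m"
      using lmeasure_integral[OF L] integral_mult_left[of \<Omega> "\<lambda>_. 1" L] unfolding m_def by simp
    finally show ?thesis unfolding I_def by simp
  qed
  have rI: "\<rho> * I = 1"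
  proof -
    have "B * m = H" using m0 unfolding B_def by simp
    also have "H = L * (c * I - m)" using HI by (simp add: algebra_simps)
    finally have "B * m = (B * k / (c-k)) * (c * I - m)" unfolding L_def .
    then have "B * m * (c - k) = B * k * (c * I - m)" using CK by (simp add: field_simps)
    then have "m * (c - k) = k * (c * I - m)" using BP by (simp add: algebra_simps)
    then have "m * (c - k) = m * (\<rho> * (c * I - m))" unfolding k_def by (simp add: algebra_simps)
    then have "c - k = \<rho> * (c * I - m)" using m0 by simp
    then have "c = c * (\<rho> * I)" unfolding k_def by (simp add: algebra_simps)
    then show ?thesis using c0 by simp
  qed
  have fnn: "f y \<ge> 0" if "y \<in> \<Omega>" for y
  proof -
    have "y \<in> closure \<Omega>" using that closure_subset by blast
    then show ?thesis using cb[of y] unfolding f_def by simp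
  qed
  have NI: "(\<integral>\<^sup>+x. ennreal (indicator \<Omega> x * f x) \<partial>lborel) = ennreal I"
    using nn_integral_has_integral_lebesgue[of \<Omega> f I] fnn integrable_integral[OF fi]
    unfolding I_def by simp
  have bmge: "\<beta> y \<le> bm" if "y \<in> closure \<Omega>" for y using xs(2)[OF that] bmx by simp
  have "(\<integral>\<^sup>+x. ennreal (indicator \<Omega> x * f x) \<partial>lborel) \<le>
        (\<integral>\<^sup>+ x\<in>\<Omega>. inverse (ennreal (bm - \<beta> x)) \<partial>lborel)"
  proof (rule nn_integral_mono)
    fix x
    show "ennreal (indicator \<Omega> x * f x) \<le> inverse (ennreal (bm - \<beta> x)) * indicator \<Omega> x"
    proof (cases "x \<in> \<Omega>")
      case True
      then have xC: "x \<in> closure \<Omega>" using closure_subset by blast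
      show ?thesis
      proof (cases "\<beta> x = bm")
        case True
        then show ?thesis using \<open>x \<in> \<Omega>\<close> by simp
      next
        case False
        then have t: "bm - \<beta> x > 0" using bmge[OF xC] by simp
        have "f x \<le> inverse (bm - \<beta> x)"
          unfolding f_def using t cbm by (simp add: divide_simps)
        then have "ennreal (f x) \<le> ennreal (inverse (bm - \<beta> x))" by (rule ennreal_leI)
        then show ?thesis using \<open>x \<in> \<Omega>\<close> inverse_ennreal[OF t] by simp
      qed
    next
      case False
      then show ?thesis by simp
    qed
  qed
  then have "ennreal I \<le> (\<integral>\<^sup>+ x\<in>\<Omega>. inverse (ennreal (bm - \<beta> x)) \<partial>lborel)" using NI by simp
  then have "ennreal \<rho> * ennreal I \<le> ennreal \<rho> * (\<integral>\<^sup>+ x\<in>\<Omega>. inverse (ennreal (bm - \<beta> x)) \<partial>lborel)"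
    by (rule mult_left_mono) simp
  moreover have "ennreal \<rho> * ennreal I = 1"
  proof -
    have "0 < \<rho> * I" using rI by simp
    then have I0: "I \<ge> 0" using assms(13) by (simp add: zero_less_mult_iff)
    have "ennreal \<rho> * ennreal I = ennreal (\<rho> * I)"
      using ennreal_mult[of \<rho> I] assms(13) I0 by simp
    then show ?thesis using rI by simp
  qed
  ultimately show False using assms(15) unfolding bm_def by simp
qed

end
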